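(* Let $N'\ge2$ and let $\mu_1<0<\mu_2<\cdots<\mu_{N'}$ be real numbers. Let $\delta$ be a sufficiently small positive constant ($0<\delta\ll1$, in particular $\delta<\mu_2$) and let $0<a<1<b<c$ be constants. Define $$\bar x_1=\frac{b-1}{2b[-\mu_1+\delta]},\qquad \bar x_k(m)=\frac{\frac{c+m-1}{m}-a}{2a[\mu_k-\delta]}\quad(2\le k\le N',\ m\ge1),$$ and let $\pi_1$ satisfy $$0<\pi_1\le\frac{\frac{b-1}{2b[-\mu_1+\delta]}}{\frac{b-1}{2b[-\mu_1+\delta]}+\frac{c-a}{2a[\mu_{N'}-\delta]}}.$$ Let $g:\mathbb R^+\to\mathbb R^+$ be differentiable with $g'(\mu)\ge0$ for $\mu>0$, and let $g(\mu_1)$ be an arbitrary given real constant. For a nonempty set $S=\{k_1<\cdots<k_{m'}\}\subseteq\{2,\dots,N'\}$ define $$\Delta(S)=\frac{1-\pi_1}{\pi_1}\bar x_1-\sum_{l=1}^{m'}\bar x_{k_l}(m'),\qquad G(S)=\frac{\sum_{l=1}^{m'}\bar x_{k_l}(m')g(\mu_{k_l})+g(\mu_{k_1})\Delta(S)}{\sum_{l=1}^{m'}\bar x_{k_l}(m')+\Delta(S)},$$ and let $\mathcal K$ be the family of those $S$ with $\pi_1\le\frac{\bar x_1}{\bar x_1+\sum_{l=1}^{m'}\bar x_{k_l}(m')}$. Consider minimizing $$\Psi(x_1,x_{k_1},\dots,x_{k_{m'}})=\pi_1 g(\mu_1)+(1-\pi_1)\frac{\sum_{l=1}^{m'}x_{k_l}g(\mu_{k_l})}{\sum_{l=1}^{m'}x_{k_l}}$$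 over all $S=\{k_1<\cdots<k_{m'}\}\in\mathcal K$ and all positive reals $x_1,x_{k_1},\dots,x_{k_{m'}}$ satisfying $x_{k_l}\ge\bar x_{k_l}(m')$ for $l=1,\dots,m'$ and $\sum_{l=1}^{m'}x_{k_l}=\frac{1-\pi_1}{\pi_1}x_1\le\frac{1-\pi_1}{\pi_1}\bar x_1$. Let $S^*=\{k_1^*<\cdots<k_m^*\}\in\arg\min_{S\in\mathcal K}G(S)$. Then the minimal value is $$\Psi\big(\bar x_1,\ \bar x_{k_1^*}(m)+\Delta(S^* ),\ \bar x_{k_2^*}(m),\dots,\bar x_{k_m^*}(m)\big)=\pi_1 g(\mu_1)+(1-\pi_1)G(S^* ),$$ attained with the set $S^*$, and the corresponding portions of time $\pi_k=(1-\pi_1)x_k/\sum_{l}x_{k_l^*}$ are $$\pi_{k_1^*}=(1-\pi_1)\frac{\bar x_{k_1^*}(m)+\Delta(S^* )}{\sum_{l=1}^m\bar x_{k_l^*}(m)+\Delta(S^* )},\qquad \pi_{k_l^*}=(1-\pi_1)\frac{\bar x_{k_l^*}(m)}{\sum_{l'=1}^m\bar x_{k_{l'}^*}(m)+\Delta(S^* )}\ (l=2,\dots,m),$$ with $\pi_k=0$ for $k\in\{2,\dots,N'\}\setminus S^*$.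
   Context: Setting: graphs $G_1,\dots,G_{N'}$ on a common node set with adjacency matrices $A_l$, constant cure probability $\beta$ and infection probability $\gamma$; configuration $\mathcal C_l=(G_l,\beta,\gamma)$, $\mu_l=\beta-\gamma\lambda_1(A_l)$ where $\lambda_1(A)$ is the eigenvalue of largest modulus. $\mathcal C_1$ violates the epidemic threshold and the system must stay in it for portion of time $\pi_1$; $\mathcal C_2,\dots,\mathcal C_{N'}$ are moving-target-defense-induced configurations satisfying it, and $g(\mu_l)$ is the cost of inducing $\mathcal C_l$. The defender switches between $\mathcal C_1$ and $\mathcal C_k$, $k\in S$, by a continuous-time Markov chain with generator $Q$; $x_l=1/(-q_{ll})$ is the expected sojourn time in $\mathcal C_l$, and the portion of time in $\mathcal C_l$ is $x_l/\sum_p x_p$. The lower/upper bounds on the $x$'s are the sojourn-time conditions of a sufficient almost-sure convergence criterion, in which $\delta,a,b,c$ are constants such that there exist symmetric positive definite matrices $P_l$ with $aI<P_k<I$ for the satisfying configurations, $bI<P_1<cI$, and $\{P_l[\gamma A_l-\beta I]\}^s\le[\gamma\lambda_1(A_l)-\beta+\delta/2]P_l$. *)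

theory Defs
  imports Complex_Main
begin

text \<open>Lower bounds on the expected sojourn times.\<close>
definition xbar1 :: "real \<Rightarrow> real \<Rightarrow> real \<Rightarrow> real" where
  "xbar1 b mu1 \<delta> = (b - 1) / (2 * b * (- mu1 + \<delta>))"

definition xbark :: "real \<Rightarrow> real \<Rightarrow> real \<Rightarrow> real \<Rightarrow> nat \<Rightarrow> real" where
  "xbark a c muk \<delta> m = ((c + real m - 1) / real m - a) / (2 * a * (muk - \<delta>))"

definition Delta :: "real \<Rightarrow> real \<Rightarrow> real \<Rightarrow> (nat \<Rightarrow> real) \<Rightarrow> real \<Rightarrow> real \<Rightarrow> nat set \<Rightarrow> real" where
  "Delta a b c mu \<delta> \<pi>1 S =
     (1 - \<pi>1) / \<pi>1 * xbar1 b (mu 1) \<delta> - (\<Sum>k\<in>S. xbark a c (mu k) \<delta> (card S))"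

definition Gfun :: "real \<Rightarrow> real \<Rightarrow> real \<Rightarrow> (nat \<Rightarrow> real) \<Rightarrow> real \<Rightarrow> real \<Rightarrow> (real \<Rightarrow> real) \<Rightarrow> nat set \<Rightarrow> real" where
  "Gfun a b c mu \<delta> \<pi>1 g S =
     ((\<Sum>k\<in>S. xbark a c (mu k) \<delta> (card S) * g (mu k)) + g (mu (Min S)) * Delta a b c mu \<delta> \<pi>1 S)
     / ((\<Sum>k\<in>S. xbark a c (mu k) \<delta> (card S)) + Delta a b c mu \<delta> \<pi>1 S)"

definition Kfam :: "real \<Rightarrow> real \<Rightarrow> real \<Rightarrow> (nat \<Rightarrow> real) \<Rightarrow> real \<Rightarrow> real \<Rightarrow> nat \<Rightarrow> nat set set" where
  "Kfam a b c mu \<delta> \<pi>1 N = {S. S \<noteq> {} \<and> S \<subseteq> {2..N} \<and>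
      \<pi>1 \<le> xbar1 b (mu 1) \<delta> / (xbar1 b (mu 1) \<delta> + (\<Sum>k\<in>S. xbark a c (mu k) \<delta> (card S)))}"

text \<open>Objective Psi (x1 is an argument although the value does not depend on it).\<close>
definition Psi :: "real \<Rightarrow> (real \<Rightarrow> real) \<Rightarrow> (nat \<Rightarrow> real) \<Rightarrow> nat set \<Rightarrow> real \<Rightarrow> (nat \<Rightarrow> real) \<Rightarrow> real" where
  "Psi \<pi>1 g mu S x1 x = \<pi>1 * g (mu 1) + (1 - \<pi>1) * ((\<Sum>k\<in>S. x k * g (mu k)) / (\<Sum>k\<in>S. x k))"

definition feasible :: "real \<Rightarrow> real \<Rightarrow> real \<Rightarrow> (nat \<Rightarrow> real) \<Rightarrow> real \<Rightarrow> real \<Rightarrow> nat \<Rightarrow> nat set \<Rightarrow> real \<Rightarrow> (nat \<Rightarrow> real) \<Rightarrow> bool" where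
  "feasible a b c mu \<delta> \<pi>1 N S x1 x \<longleftrightarrow>
     S \<in> Kfam a b c mu \<delta> \<pi>1 N \<and> x1 > 0 \<and>
     (\<forall>k\<in>S. x k > 0 \<and> x k \<ge> xbark a c (mu k) \<delta> (card S)) \<and>
     (\<Sum>k\<in>S. x k) = (1 - \<pi>1) / \<pi>1 * x1 \<and>
     (1 - \<pi>1) / \<pi>1 * x1 \<le> (1 - \<pi>1) / \<pi>1 * xbar1 b (mu 1) \<delta>"

end

theory Submission
  imports Defs
begin

lemma g_mono_help:
  fixes g :: "real \<Rightarrow> real"
  assumes d: "\<And>x. x > 0 \<Longrightarrow> \<exists>D. (g has_real_derivative D) (at x) \<and> D \<ge> 0"
    and "0 < x" "x \<le> y"
  shows "g x \<le> g y"
proof (rule DERIV_nonneg_imp_increasing_open[OF \<open>x \<le> y\<close>])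
  show "\<And>z. x < z \<Longrightarrow> z < y \<Longrightarrow> \<exists>D. DERIV g z :> D \<and> D \<ge> 0"
    using d assms(2) by auto
  have "\<forall>z\<in>{x..y}. isCont g z"
  proof
    fix z assume "z \<in> {x..y}"
    then have "z > 0" using assms by auto
    then obtain D where "(g has_real_derivative D) (at z)" using d by blast
    then show "isCont g z" by (rule DERIV_isCont)
  qed
  then show "continuous_on {x..y} g" by (rule continuous_at_imp_continuous_on)
qed

lemma xbark_pos:
  assumes "0 < a" "a < 1" "1 < c" "m \<ge> 1" "muk > \<delta>"
  shows "xbark a c muk \<delta> m > 0"
proof -
  have "(c + real m - 1) / real m \<ge> 1"
    using assms by (simp add: field_simps)
  then have "(c + real m - 1) / real m - a > 0" using assms by linarith
  moreover have "2 * a * (muk - \<delta>) > 0" using assms by simp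
  ultimately show ?thesis unfolding xbark_def by simp
qed

lemma avg_bound:
  fixes f x gg :: "nat \<Rightarrow> real"
  assumes fin: "finite S" and k1: "k1 \<in> S"
    and ge: "\<forall>k\<in>S. x k \<ge> f k" and gk: "\<forall>k\<in>S. gg k \<ge> gg k1"
    and fpos: "\<forall>k\<in>S. f k > 0"
    and T: "(\<Sum>k\<in>S. x k) \<le> M" "0 < (\<Sum>k\<in>S. x k)"
    and M: "M = (\<Sum>k\<in>S. f k) + D"
  shows "((\<Sum>k\<in>S. f k * gg k) + gg k1 * D) / ((\<Sum>k\<in>S. f k) + D)
          \<le> (\<Sum>k\<in>S. x k * gg k) / (\<Sum>k\<in>S. x k)"
proof -
  define F where "F = (\<Sum>k\<in>S. f k)"
  define T where "T = (\<Sum>k\<in>S. x k)"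
  define E where "E = (\<Sum>k\<in>S. f k * gg k) - gg k1 * F"
  have E: "E \<ge> 0"
  proof -
    have "(\<Sum>k\<in>S. f k * gg k1) \<le> (\<Sum>k\<in>S. f k * gg k)"
      by (rule sum_mono) (use fpos gk in \<open>auto intro: mult_left_mono\<close>)
    then show ?thesis unfolding E_def F_def by (simp add: sum_distrib_right sum_distrib_left mult.commute)
  qed
  have "(\<Sum>k\<in>S. (x k - f k) * gg k1) \<le> (\<Sum>k\<in>S. (x k - f k) * gg k)"
    by (rule sum_mono) (use ge gk in \<open>auto intro: mult_left_mono\<close>)
  then have num: "gg k1 * (T - F) + (\<Sum>k\<in>S. f k * gg k) \<le> (\<Sum>k\<in>S. x k * gg k)"
    unfolding T_def F_def
    by (simp add: sum_distrib_left sum_subtractf right_diff_distrib algebra_simps sum.distrib)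
  have Tp: "T > 0" "T \<le> M" using T unfolding T_def by auto
  have Mp: "M > 0" using Tp by linarith
  have "E / M \<le> E / T" using E Tp by (simp add: frac_le)
  have lhs: "((\<Sum>k\<in>S. f k * gg k) + gg k1 * D) / ((\<Sum>k\<in>S. f k) + D) = gg k1 + E / M"
    using Mp unfolding M E_def F_def by (simp add: field_simps)
  have "gg k1 + E / T = (gg k1 * (T - F) + (\<Sum>k\<in>S. f k * gg k)) / T"
    using Tp unfolding E_def by (simp add: field_simps)
  also have "\<dots> \<le> (\<Sum>k\<in>S. x k * gg k) / T"
    using num Tp by (simp add: divide_right_mono)
  finally have rhs: "gg k1 + E / T \<le> (\<Sum>k\<in>S. x k * gg k) / T" .
  show ?thesis using lhs rhs \<open>E / M \<le> E / T\<close> unfolding T_def by linarith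
qed

theorem theorem6:
  fixes N :: nat and mu :: "nat \<Rightarrow> real" and \<delta> a b c \<pi>1 :: real
    and g :: "real \<Rightarrow> real" and Sstar :: "nat set"
  assumes N2: "N \<ge> 2"
    and mu1: "mu 1 < 0" and mu2: "0 < mu 2"
    and mu_mono: "\<And>i j. 2 \<le> i \<Longrightarrow> i < j \<Longrightarrow> j \<le> N \<Longrightarrow> mu i < mu j"
    and delta: "0 < \<delta>" "\<delta> < mu 2"
    and abc: "0 < a" "a < 1" "1 < b" "b < c"
    and pi1: "0 < \<pi>1"
      "\<pi>1 \<le> xbar1 b (mu 1) \<delta> / (xbar1 b (mu 1) \<delta> + (c - a) / (2 * a * (mu N - \<delta>)))"
    and g_pos: "\<And>x. x > 0 \<Longrightarrow> g x > 0"
    and g_deriv: "\<And>x. x > 0 \<Longrightarrow> \<exists>D. (g has_real_derivative D) (at x) \<and> D \<ge> 0"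
    and Sstar_K: "Sstar \<in> Kfam a b c mu \<delta> \<pi>1 N"
    and Sstar_min: "\<And>S. S \<in> Kfam a b c mu \<delta> \<pi>1 N \<Longrightarrow> Gfun a b c mu \<delta> \<pi>1 g Sstar \<le> Gfun a b c mu \<delta> \<pi>1 g S"
  shows
    "let m = card Sstar; k1 = Min Sstar; X1 = xbar1 b (mu 1) \<delta>;
         Dl = Delta a b c mu \<delta> \<pi>1 Sstar;
         xs = (\<lambda>k. if k = k1 then xbark a c (mu k) \<delta> m + Dl else xbark a c (mu k) \<delta> m);
         tot = (\<Sum>k\<in>Sstar. xbark a c (mu k) \<delta> m) + Dl;
         pis = (\<lambda>k. if k \<in> Sstar then (1 - \<pi>1) * xs k / (\<Sum>l\<in>Sstar. xs l) else 0)
     in feasible a b c mu \<delta> \<pi>1 N Sstar X1 xs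
      \<and> (\<forall>S x1 x. feasible a b c mu \<delta> \<pi>1 N S x1 x \<longrightarrow> Psi \<pi>1 g mu Sstar X1 xs \<le> Psi \<pi>1 g mu S x1 x)
      \<and> Psi \<pi>1 g mu Sstar X1 xs = \<pi>1 * g (mu 1) + (1 - \<pi>1) * Gfun a b c mu \<delta> \<pi>1 g Sstar
      \<and> pis k1 = (1 - \<pi>1) * (xbark a c (mu k1) \<delta> m + Dl) / tot
      \<and> (\<forall>k\<in>Sstar - {k1}. pis k = (1 - \<pi>1) * xbark a c (mu k) \<delta> m / tot)
      \<and> (\<forall>k\<in>{2..N} - Sstar. pis k = 0)"
proof -
  define m where "m = card Sstar"
  define k1 where "k1 = Min Sstar"
  define X1 where "X1 = xbar1 b (mu 1) \<delta>"
  define Dl where "Dl = Delta a b c mu \<delta> \<pi>1 Sstar"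
  define xs where "xs = (\<lambda>k. if k = k1 then xbark a c (mu k) \<delta> m + Dl else xbark a c (mu k) \<delta> m)"
  define tot where "tot = (\<Sum>k\<in>Sstar. xbark a c (mu k) \<delta> m) + Dl"
  define pis where "pis = (\<lambda>k. if k \<in> Sstar then (1 - \<pi>1) * xs k / (\<Sum>l\<in>Sstar. xs l) else 0)"
  have X1pos: "X1 > 0" unfolding X1_def xbar1_def using abc mu1 delta by simp
  have mupos: "\<And>k. 2 \<le> k \<Longrightarrow> k \<le> N \<Longrightarrow> mu k > \<delta>"
  proof -
    fix k assume "2 \<le> k" "k \<le> N"
    then have "mu 2 \<le> mu k" using mu_mono[of 2 k] by (cases "k = 2") auto
    then show "mu k > \<delta>" using delta by linarith
  qed
  have xbpos: "\<And>S k. S \<in> Kfam a b c mu \<delta> \<pi>1 N \<Longrightarrow> k \<in> S \<Longrightarrow> xbark a c (mu k) \<delta> (card S) > 0"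
  proof -
    fix S k assume S: "S \<in> Kfam a b c mu \<delta> \<pi>1 N" "k \<in> S"
    then have "S \<subseteq> {2..N}" unfolding Kfam_def by auto
    then have fin: "finite S" using finite_subset by blast
    then have "card S \<ge> 1" using S(2) by (metis One_nat_def Suc_leI card_gt_0_iff empty_iff)
    moreover have "mu k > \<delta>" using mupos S(2) \<open>S \<subseteq> {2..N}\<close> by auto
    ultimately show "xbark a c (mu k) \<delta> (card S) > 0"
      using xbark_pos abc by auto
  qed
  have XNpos: "(c - a) / (2 * a * (mu N - \<delta>)) > 0" using mupos[of N] N2 abc by simp
  have pi1lt: "\<pi>1 < 1"
  proof -
    have "X1 / (X1 + (c - a) / (2 * a * (mu N - \<delta>))) < 1" using X1pos XNpos by simp
    then show ?thesis using pi1 unfolding X1_def by linarith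
  qed
  have Kfacts: "\<And>S. S \<in> Kfam a b c mu \<delta> \<pi>1 N \<Longrightarrow> finite S \<and> S \<noteq> {} \<and> S \<subseteq> {2..N}
       \<and> (\<Sum>k\<in>S. xbark a c (mu k) \<delta> (card S)) \<le> (1 - \<pi>1) / \<pi>1 * X1"
  proof -
    fix S assume S: "S \<in> Kfam a b c mu \<delta> \<pi>1 N"
    then have sub: "S \<subseteq> {2..N}" and ne: "S \<noteq> {}"
      and le: "\<pi>1 \<le> X1 / (X1 + (\<Sum>k\<in>S. xbark a c (mu k) \<delta> (card S)))"
      unfolding Kfam_def X1_def by auto
    have fin: "finite S" using sub finite_subset by blast
    define F where "F = (\<Sum>k\<in>S. xbark a c (mu k) \<delta> (card S))"
    have "F \<ge> 0" unfolding F_def using xbpos[OF S] by (simp add: sum_nonneg less_imp_le)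
    then have "\<pi>1 * (X1 + F) \<le> X1" using le X1pos unfolding F_def[symmetric]
      by (simp add: pos_le_divide_eq)
    then have "\<pi>1 * F \<le> (1 - \<pi>1) * X1" by (simp add: algebra_simps)
    then have "F \<le> (1 - \<pi>1) / \<pi>1 * X1" using pi1(1) by (simp add: field_simps)
    then show "finite S \<and> S \<noteq> {} \<and> S \<subseteq> {2..N}
       \<and> (\<Sum>k\<in>S. xbark a c (mu k) \<delta> (card S)) \<le> (1 - \<pi>1) / \<pi>1 * X1"
      using fin ne sub unfolding F_def by auto
  qed
  note SK = Kfacts[OF Sstar_K]
  have k1in: "k1 \<in> Sstar" unfolding k1_def using SK by auto
  have Dlnn: "Dl \<ge> 0" unfolding Dl_def Delta_def using SK unfolding X1_def by simp
  have sumxs: "(\<Sum>l\<in>Sstar. xs l) = tot"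
  proof -
    have "(\<Sum>l\<in>Sstar. xs l) = (\<Sum>l\<in>Sstar. xbark a c (mu l) \<delta> m + (if l = k1 then Dl else 0))"
      unfolding xs_def by (rule sum.cong) auto
    also have "\<dots> = tot" unfolding tot_def using SK k1in
      by (simp add: sum.distrib)
    finally show ?thesis .
  qed
  have sumxsg: "(\<Sum>l\<in>Sstar. xs l * g (mu l)) =
      (\<Sum>l\<in>Sstar. xbark a c (mu l) \<delta> m * g (mu l)) + g (mu k1) * Dl"
  proof -
    have "(\<Sum>l\<in>Sstar. xs l * g (mu l)) = (\<Sum>l\<in>Sstar. xbark a c (mu l) \<delta> m * g (mu l)
          + (if l = k1 then Dl * g (mu l) else 0))"
      unfolding xs_def by (rule sum.cong) (auto simp: algebra_simps)
    also have "\<dots> = (\<Sum>l\<in>Sstar. xbark a c (mu l) \<delta> m * g (mu l)) + g (mu k1) * Dl"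
      using SK k1in by (simp add: sum.distrib mult.commute)
    finally show ?thesis .
  qed
  have totM: "tot = (1 - \<pi>1) / \<pi>1 * X1"
    unfolding tot_def Dl_def Delta_def m_def X1_def by simp
  have feas: "feasible a b c mu \<delta> \<pi>1 N Sstar X1 xs"
    unfolding feasible_def
  proof (intro conjI ballI)
    show "Sstar \<in> Kfam a b c mu \<delta> \<pi>1 N" by (rule Sstar_K)
    show "X1 > 0" by (rule X1pos)
    fix k assume k: "k \<in> Sstar"
    show "xbark a c (mu k) \<delta> (card Sstar) \<le> xs k" unfolding xs_def m_def using Dlnn by auto
    show "xs k > 0" using xbpos[OF Sstar_K k] Dlnn unfolding xs_def m_def by auto
  next
    show "(\<Sum>k\<in>Sstar. xs k) = (1 - \<pi>1) / \<pi>1 * X1" using sumxs totM by simp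
  qed (simp add: X1_def)
  have PsiS: "Psi \<pi>1 g mu Sstar X1 xs = \<pi>1 * g (mu 1) + (1 - \<pi>1) * Gfun a b c mu \<delta> \<pi>1 g Sstar"
    unfolding Psi_def Gfun_def using sumxs sumxsg
    unfolding tot_def m_def k1_def Dl_def by simp
  have opt: "\<forall>S x1 x. feasible a b c mu \<delta> \<pi>1 N S x1 x \<longrightarrow> Psi \<pi>1 g mu Sstar X1 xs \<le> Psi \<pi>1 g mu S x1 x"
  proof (intro allI impI)
    fix S x1 x assume fe: "feasible a b c mu \<delta> \<pi>1 N S x1 x"
    then have SKf: "S \<in> Kfam a b c mu \<delta> \<pi>1 N" and x1p: "x1 > 0"
      and xge: "\<forall>k\<in>S. x k > 0 \<and> x k \<ge> xbark a c (mu k) \<delta> (card S)"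
      and sx: "(\<Sum>k\<in>S. x k) = (1 - \<pi>1) / \<pi>1 * x1"
      and sx2: "(1 - \<pi>1) / \<pi>1 * x1 \<le> (1 - \<pi>1) / \<pi>1 * X1"
      unfolding feasible_def X1_def by auto
    note SF = Kfacts[OF SKf]
    define s1 where "s1 = Min S"
    have s1in: "s1 \<in> S" unfolding s1_def using SF by auto
    have gk: "\<forall>k\<in>S. g (mu k) \<ge> g (mu s1)"
    proof
      fix k assume k: "k \<in> S"
      have "s1 \<le> k" unfolding s1_def using SF k by auto
      moreover have "2 \<le> s1" "k \<le> N" using SF k s1in by auto
      ultimately have "mu s1 \<le> mu k" using mu_mono by (cases "s1 = k") (auto intro: less_imp_le)
      moreover have "mu s1 > 0" using mupos[of s1] \<open>2 \<le> s1\<close> \<open>s1 \<le> k\<close> \<open>k \<le> N\<close> delta by force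
      ultimately show "g (mu k) \<ge> g (mu s1)" using g_mono_help[OF g_deriv] by blast
    qed
    have Tpos: "0 < (\<Sum>k\<in>S. x k)"
      using SF xge by (intro sum_pos) auto
    have Gle: "Gfun a b c mu \<delta> \<pi>1 g S \<le> (\<Sum>k\<in>S. x k * g (mu k)) / (\<Sum>k\<in>S. x k)"
      unfolding Gfun_def s1_def[symmetric]
      apply (rule avg_bound[where M = "(1 - \<pi>1) / \<pi>1 * X1"])
      using SF s1in xge gk xbpos[OF SKf] Tpos sx sx2
      by (auto simp: Delta_def X1_def)
    have "Gfun a b c mu \<delta> \<pi>1 g Sstar \<le> (\<Sum>k\<in>S. x k * g (mu k)) / (\<Sum>k\<in>S. x k)"
      using Sstar_min[OF SKf] Gle by linarith
    then have "(1 - \<pi>1) * Gfun a b c mu \<delta> \<pi>1 g Sstar \<le> (1 - \<pi>1) * ((\<Sum>k\<in>S. x k * g (mu k)) / (\<Sum>k\<in>S. x k))"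
      using pi1lt by (intro mult_left_mono) auto
    then show "Psi \<pi>1 g mu Sstar X1 xs \<le> Psi \<pi>1 g mu S x1 x"
      using PsiS Psi_def[of \<pi>1 g mu S x1 x] by linarith
  qed
  have p1: "pis k1 = (1 - \<pi>1) * (xbark a c (mu k1) \<delta> m + Dl) / tot"
    unfolding pis_def using k1in sumxs by (simp add: xs_def)
  have p2: "\<forall>k\<in>Sstar - {k1}. pis k = (1 - \<pi>1) * xbark a c (mu k) \<delta> m / tot"
    unfolding pis_def using sumxs by (simp add: xs_def)
  have p3: "\<forall>k\<in>{2..N} - Sstar. pis k = 0" unfolding pis_def by simp
  have all: "feasible a b c mu \<delta> \<pi>1 N Sstar X1 xs
      \<and> (\<forall>S x1 x. feasible a b c mu \<delta> \<pi>1 N S x1 x \<longrightarrow> Psi \<pi>1 g mu Sstar X1 xs \<le> Psi \<pi>1 g mu S x1 x)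
      \<and> Psi \<pi>1 g mu Sstar X1 xs = \<pi>1 * g (mu 1) + (1 - \<pi>1) * Gfun a b c mu \<delta> \<pi>1 g Sstar
      \<and> pis k1 = (1 - \<pi>1) * (xbark a c (mu k1) \<delta> m + Dl) / tot
      \<and> (\<forall>k\<in>Sstar - {k1}. pis k = (1 - \<pi>1) * xbark a c (mu k) \<delta> m / tot)
      \<and> (\<forall>k\<in>{2..N} - Sstar. pis k = 0)"
    using feas opt PsiS p1 p2 p3 by blast
  show ?thesis
    unfolding Let_def
    by (rule all[unfolded pis_def xs_def tot_def Dl_def X1_def k1_def m_def])
qed

end
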